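(* Let $\mathcal{D}$ be a DAG on vertex set $[p]$, let $\mathcal{V} \subseteq [p]$, and let $k \in \mathcal{V}$. If $R_{\mathcal{D}}(\mathcal{V}, k) > 0$, then $k \in \mathrm{Maximal}(\mathcal{D}, \mathcal{V})$, i.e. no (proper) descendant of $k$ in $\mathcal{D}$ lies in $\mathcal{V}$.
   Context: For a DAG $\mathcal{D}$ on $[p]$ and $i, j \in [p]$, $S \subseteq [p]\setminus\{i,j\}$, write $i \not\perp\!\!\!\perp_{\mathcal{D}} j \mid S$ if $i$ and $j$ are d-connected given $S$ in $\mathcal{D}$. For $\mathcal{V} \subseteq [p]$, the moral subgraph $\mathcal{M}_{\mathcal{V}}(\mathcal{D})$ is the undirected graph with vertex set $\mathcal{V}$ and edge set $\{ i - j : i \neq j \in \mathcal{V},\ i \not\perp\!\!\!\perp_{\mathcal{D}} j \mid \mathcal{V}\setminus\{i,j\}\}$. $\mathcal{G}[W]$ denotes the induced subgraph of an undirected graph $\mathcal{G}$ on $W$, and $\mathcal{V}\setminus k := \mathcal{V}\setminus\{k\}$. The removed edge set is $\mathcal{R}_{\mathcal{D}}(\mathcal{V}, k) = \mathcal{M}_{\mathcal{V}}(\mathcal{D})[\mathcal{V}\setminus k] \setminus \mathcal{M}_{\mathcal{V}\setminus k}(\mathcal{D})$ (edges of the induced subgraph of $\mathcal{M}_{\mathcal{V}}(\mathcal{D})$ on $\mathcal{V}\setminus k$ that are absent from $\mathcal{M}_{\mathcal{V}\setminus k}(\mathcal{D})$), and the removal score is $R_{\mathcal{D}}(\mathcal{V},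 k) = |\mathcal{R}_{\mathcal{D}}(\mathcal{V}, k)|$. With $\mathrm{de}_{\mathcal{D}}(v)$ the set of descendants of $v$ in $\mathcal{D}$ (nodes reachable from $v$ by a nonempty directed path, excluding $v$ itself), $\mathrm{Maximal}(\mathcal{D}, \mathcal{V}) := \{ v \in \mathcal{V} : \mathrm{de}_{\mathcal{D}}(v) \cap \mathcal{V} = \emptyset \}$. *)

theory Defs
  imports Main
begin

text \<open>A DAG on vertex set [p] = {1..p} is an edge relation E (pairs (u,v) meaning u -> v)
  contained in {1..p} x {1..p} and acyclic.\<close>

definition is_dag :: "nat \<Rightarrow> (nat \<times> nat) set \<Rightarrow> bool" where
  "is_dag p E \<longleftrightarrow> E \<subseteq> {1..p} \<times> {1..p} \<and> acyclic E"

definition adj :: "(nat \<times> nat) set \<Rightarrow> nat \<Rightarrow> nat \<Rightarrow> bool" where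
  "adj E u v \<longleftrightarrow> (u, v) \<in> E \<or> (v, u) \<in> E"

definition collider :: "(nat \<times> nat) set \<Rightarrow> nat list \<Rightarrow> nat \<Rightarrow> bool" where
  "collider E ps m \<longleftrightarrow> (ps ! (m - 1), ps ! m) \<in> E \<and> (ps ! (m + 1), ps ! m) \<in> E"

definition d_connected :: "(nat \<times> nat) set \<Rightarrow> nat \<Rightarrow> nat \<Rightarrow> nat set \<Rightarrow> bool" where
  "d_connected E i j S \<longleftrightarrow>
     (\<exists>ps. length ps \<ge> 2 \<and> hd ps = i \<and> last ps = j \<and> distinct ps \<and>
       (\<forall>m. m + 1 < length ps \<longrightarrow> adj E (ps ! m) (ps ! (m + 1))) \<and>
       (\<forall>m. 0 < m \<and> m + 1 < length ps \<longrightarrow>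
          (if collider E ps m then (\<exists>w \<in> S. (ps ! m, w) \<in> E\<^sup>*)
           else ps ! m \<notin> S)))"

text \<open>Edge set of the moral subgraph M_V(D), undirected edges as 2-element sets.\<close>
definition moral_edges :: "(nat \<times> nat) set \<Rightarrow> nat set \<Rightarrow> nat set set" where
  "moral_edges E V = {{i, j} | i j. i \<in> V \<and> j \<in> V \<and> i \<noteq> j \<and> d_connected E i j (V - {i, j})}"

definition induced_edges :: "nat set set \<Rightarrow> nat set \<Rightarrow> nat set set" where
  "induced_edges F W = {e \<in> F. e \<subseteq> W}"

definition removed_edges :: "(nat \<times> nat) set \<Rightarrow> nat set \<Rightarrow> nat \<Rightarrow> nat set set" where
  "removed_edges E V k = induced_edges (moral_edges E V) (V - {k}) - moral_edges E (V - {k})"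

definition removal_score :: "(nat \<times> nat) set \<Rightarrow> nat set \<Rightarrow> nat \<Rightarrow> nat" where
  "removal_score E V k = card (removed_edges E V k)"

definition descendants :: "(nat \<times> nat) set \<Rightarrow> nat \<Rightarrow> nat set" where
  "descendants E v = {w. (v, w) \<in> E\<^sup>+}"

definition Maximal :: "(nat \<times> nat) set \<Rightarrow> nat set \<Rightarrow> nat set" where
  "Maximal E V = {v \<in> V. descendants E v \<inter> V = {}}"

end

theory Submission
  imports Defs
begin

definition wk :: "(nat \<times> nat) set \<Rightarrow> nat set \<Rightarrow> (nat \<Rightarrow> nat) \<Rightarrow> nat \<Rightarrow> bool" where
  "wk E Z f n \<longleftrightarrow> 2 \<le> n \<and> (\<forall>m. m + 1 < n \<longrightarrow> adj E (f m) (f (m + 1))) \<and>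
     (\<forall>m. 0 < m \<and> m + 1 < n \<longrightarrow>
        (if (f (m - 1), f m) \<in> E \<and> (f (m + 1), f m) \<in> E then (\<exists>w\<in>Z. (f m, w) \<in> E\<^sup>*)
         else f m \<notin> Z))"

inductive reach :: "(nat \<times> nat) set \<Rightarrow> nat set \<Rightarrow> nat \<Rightarrow> nat \<Rightarrow> bool \<Rightarrow> bool"
  for E Z i where
  r1: "(i, v) \<in> E \<Longrightarrow> reach E Z i v True"
| r2: "(v, i) \<in> E \<Longrightarrow> reach E Z i v False"
| r3: "reach E Z i v True \<Longrightarrow> \<exists>w\<in>Z. (v, w) \<in> E\<^sup>* \<Longrightarrow> (u, v) \<in> E \<Longrightarrow> reach E Z i u False"
| r4: "reach E Z i v d \<Longrightarrow> v \<notin> Z \<Longrightarrow> (v, u) \<in> E \<Longrightarrow> reach E Z i u True"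
| r5: "reach E Z i v False \<Longrightarrow> v \<notin> Z \<Longrightarrow> (u, v) \<in> E \<Longrightarrow> reach E Z i u False"

lemma acyc_asym: "acyclic E \<Longrightarrow> (a, b) \<in> E \<Longrightarrow> (b, a) \<notin> E"
  by (meson acyclic_def r_into_trancl trancl_into_trancl)

lemma wk_ext:
  assumes "wk E Z f n" "f (n - 1) = v" "adj E v u"
    "if (f (n - 2), v) \<in> E \<and> (u, v) \<in> E then (\<exists>w\<in>Z. (v, w) \<in> E\<^sup>*) else v \<notin> Z"
  shows "wk E Z (f(n := u)) (Suc n)"
proof -
  have n2: "2 \<le> n" using assms(1) by (simp add: wk_def)
  have A: "\<forall>m. m + 1 < Suc n \<longrightarrow> adj E ((f(n:=u)) m) ((f(n:=u)) (m + 1))"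
  proof (intro allI impI)
    fix m assume "m + 1 < Suc n"
    show "adj E ((f(n:=u)) m) ((f(n:=u)) (m + 1))"
    proof (cases "m + 1 < n")
      case True thus ?thesis using assms(1) by (simp add: wk_def)
    next
      case False
      hence "m = n - 1" using \<open>m + 1 < Suc n\<close> by simp
      moreover have "n - 1 \<noteq> n" using n2 by simp
      ultimately show ?thesis using assms(2,3) n2 by simp
    qed
  qed
  have B: "\<forall>m. 0 < m \<and> m + 1 < Suc n \<longrightarrow>
        (if ((f(n:=u)) (m - 1), (f(n:=u)) m) \<in> E \<and> ((f(n:=u)) (m + 1), (f(n:=u)) m) \<in> E
         then (\<exists>w\<in>Z. ((f(n:=u)) m, w) \<in> E\<^sup>*) else (f(n:=u)) m \<notin> Z)"
  proof (intro allI impI)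
    fix m assume m: "0 < m \<and> m + 1 < Suc n"
    show "if ((f(n:=u)) (m - 1), (f(n:=u)) m) \<in> E \<and> ((f(n:=u)) (m + 1), (f(n:=u)) m) \<in> E
         then (\<exists>w\<in>Z. ((f(n:=u)) m, w) \<in> E\<^sup>*) else (f(n:=u)) m \<notin> Z"
    proof (cases "m + 1 < n")
      case True
      hence "m - 1 \<noteq> n" "m \<noteq> n" "m + 1 \<noteq> n" by auto
      thus ?thesis using assms(1) m True unfolding wk_def by auto
    next
      case False
      hence mm: "m = n - 1" using m by arith
      have "m - 1 = n - 2" using mm by simp
      moreover have "m - 1 \<noteq> n" "m \<noteq> n" using m mm n2 by auto
      moreover have "m + 1 = n" using mm n2 by simp
      ultimately show ?thesis using assms(2,4) mm by simp
    qed
  qed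
  show ?thesis unfolding wk_def using A B n2 by simp
qed

lemma reach_wk:
  assumes asym: "\<And>a b. (a, b) \<in> E \<Longrightarrow> (b, a) \<notin> E"
  shows "reach E Z i v d \<Longrightarrow> \<exists>f n. wk E Z f n \<and> f 0 = i \<and> f (n - 1) = v \<and>
      (if d then (f (n - 2), v) \<in> E else (v, f (n - 2)) \<in> E)"
proof (induction rule: reach.induct)
  case (r1 v)
  let ?f = "\<lambda>x::nat. if x = 0 then i else v"
  have "wk E Z ?f 2" using r1 by (auto simp: wk_def adj_def)
  thus ?case using r1 by (intro exI[of _ ?f] exI[of _ 2]) auto
next
  case (r2 v)
  let ?f = "\<lambda>x::nat. if x = 0 then i else v"
  have "wk E Z ?f 2" using r2 by (auto simp: wk_def adj_def)
  thus ?case using r2 by (intro exI[of _ ?f] exI[of _ 2]) auto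
next
  case (r3 v u)
  then obtain f n where f: "wk E Z f n" "f 0 = i" "f (n - 1) = v" "(f (n - 2), v) \<in> E" by auto
  have n2: "2 \<le> n" using f(1) by (simp add: wk_def)
  have W: "wk E Z (f(n := u)) (Suc n)"
    by (rule wk_ext[OF f(1) f(3)]) (use r3 f in \<open>auto simp: adj_def\<close>)
  define g where "g = f(n := u)"
  have "wk E Z g (Suc n)" using W by (simp add: g_def)
  moreover have "g 0 = i" "g (Suc n - 1) = u" using f n2 by (auto simp: g_def)
  moreover have "g (Suc n - 2) = v" using f n2 by (auto simp: g_def)
  ultimately show ?case using r3 by (intro exI[of _ g] exI[of _ "Suc n"]) simp
next
  case (r4 v d u)
  then obtain f n where f: "wk E Z f n" "f 0 = i" "f (n - 1) = v" by auto
  have n2: "2 \<le> n" using f(1) by (simp add: wk_def)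
  have "(u, v) \<notin> E" using asym r4 by blast
  hence W: "wk E Z (f(n := u)) (Suc n)"
    by (intro wk_ext[OF f(1) f(3)]) (use r4 f in \<open>auto simp: adj_def\<close>)
  define g where "g = f(n := u)"
  have "wk E Z g (Suc n)" using W by (simp add: g_def)
  moreover have "g 0 = i" "g (Suc n - 1) = u" using f n2 by (auto simp: g_def)
  moreover have "g (Suc n - 2) = v" using f n2 by (auto simp: g_def)
  ultimately show ?case using r4 by (intro exI[of _ g] exI[of _ "Suc n"]) simp
next
  case (r5 v u)
  then obtain f n where f: "wk E Z f n" "f 0 = i" "f (n - 1) = v" "(v, f (n - 2)) \<in> E" by auto
  have n2: "2 \<le> n" using f(1) by (simp add: wk_def)
  have "(f (n - 2), v) \<notin> E" using asym f(4) by blast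
  hence W: "wk E Z (f(n := u)) (Suc n)"
    by (intro wk_ext[OF f(1) f(3)]) (use r5 f in \<open>auto simp: adj_def\<close>)
  define g where "g = f(n := u)"
  have "wk E Z g (Suc n)" using W by (simp add: g_def)
  moreover have "g 0 = i" "g (Suc n - 1) = u" using f n2 by (auto simp: g_def)
  moreover have "g (Suc n - 2) = v" using f n2 by (auto simp: g_def)
  ultimately show ?case using r5 by (intro exI[of _ g] exI[of _ "Suc n"]) simp
qed


lemma wk_fwd:
  assumes w: "wk E Z f n" and x0: "0 < x" and e: "(f (x - 1), f x) \<in> E"
  shows "x \<le> y \<Longrightarrow> y < n \<Longrightarrow> (\<exists>w\<in>Z. (f x, w) \<in> E\<^sup>*) \<or> ((f x, f y) \<in> E\<^sup>* \<and> (f (y - 1), f y) \<in> E)"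
proof (induction y rule: dec_induct)
  case base
  then show ?case using e by simp
next
  case (step y)
  have y0: "0 < y" "y + 1 < n" using step x0 by auto
  show ?case
  proof (cases "\<exists>w\<in>Z. (f x, w) \<in> E\<^sup>*")
    case True then show ?thesis by simp
  next
    case False
    with step have h: "(f x, f y) \<in> E\<^sup>*" "(f (y - 1), f y) \<in> E" by auto
    have c: "if (f (y - 1), f y) \<in> E \<and> (f (y + 1), f y) \<in> E then (\<exists>w\<in>Z. (f y, w) \<in> E\<^sup>*)
         else f y \<notin> Z" using w y0 unfolding wk_def by blast
    have a: "adj E (f y) (f (y + 1))" using w y0 unfolding wk_def by blast
    show ?thesis
    proof (cases "(f (y + 1), f y) \<in> E")
      case True
      with c h obtain w where "w \<in> Z" "(f y, w) \<in> E\<^sup>*" by auto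
      with h(1) have "(f x, w) \<in> E\<^sup>*" by (meson rtrancl_trans)
      with \<open>w \<in> Z\<close> False show ?thesis by blast
    next
      case False
      with a have "(f y, f (Suc y)) \<in> E" by (simp add: adj_def)
      with h(1) have "(f x, f (Suc y)) \<in> E\<^sup>*" by (meson rtrancl.rtrancl_into_rtrancl)
      with \<open>(f y, f (Suc y)) \<in> E\<close> show ?thesis by simp
    qed
  qed
qed

lemma shortcut:
  assumes acyc: "acyclic E"
  shows "wk E Z f n \<Longrightarrow> f 0 = i \<Longrightarrow> f (n - 1) = j \<Longrightarrow> i \<noteq> j \<Longrightarrow>
    \<exists>g m. wk E Z g m \<and> g 0 = i \<and> g (m - 1) = j \<and> inj_on g {..<m}"
proof (induction n arbitrary: f rule: less_induct)
  case (less n f)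
  show ?case
  proof (cases "inj_on f {..<n}")
    case True then show ?thesis using less.prems by blast
  next
    case False
    then obtain x y where xy: "x < n" "y < n" "f x = f y" "x \<noteq> y" by (auto simp: inj_on_def)
    have "\<exists>p q. p < q \<and> q < n \<and> f p = f q"
      using xy by (metis linorder_neqE_nat)
    then obtain p q where pq: "p < q" "q < n" "f p = f q" by blast
    define g where "g = (\<lambda>x. if x \<le> p then f x else f (x + (q - p)))"
    define m where "m = n - (q - p)"
    have wf: "wk E Z f n" using less.prems by simp
    have n2: "2 \<le> n" using wf by (simp add: wk_def)
    have m_lt: "m < n" using pq by (simp add: m_def)
    have gl: "\<And>x. x \<le> p \<Longrightarrow> g x = f x" by (simp add: g_def)
    have gh: "\<And>x. p \<le> x \<Longrightarrow> g x = f (x + (q - p))"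
      using pq by (auto simp: g_def)
    have pm: "p \<le> m - 1" using pq by (simp add: m_def)
    have m2: "2 \<le> m"
    proof (rule ccontr)
      assume "\<not> 2 \<le> m"
      hence "p = 0" "q = n - 1" using pq by (auto simp: m_def)
      thus False using less.prems pq by simp
    qed
    have g0: "g 0 = i" using less.prems by (simp add: g_def)
    have gm: "g (m - 1) = j"
    proof -
      have "g (m - 1) = f (m - 1 + (q - p))" using gh pm by blast
      also have "m - 1 + (q - p) = n - 1" using pq m2 by (simp add: m_def)
      finally show ?thesis using less.prems by simp
    qed
    have adjf: "\<And>x. x + 1 < n \<Longrightarrow> adj E (f x) (f (x + 1))" using wf by (simp add: wk_def)
    have cf: "\<And>x. 0 < x \<Longrightarrow> x + 1 < n \<Longrightarrow> (if (f (x - 1), f x) \<in> E \<and> (f (x + 1), f x) \<in> E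
        then (\<exists>w\<in>Z. (f x, w) \<in> E\<^sup>*) else f x \<notin> Z)" using wf unfolding wk_def by blast
    have A: "\<forall>x. x + 1 < m \<longrightarrow> adj E (g x) (g (x + 1))"
    proof (intro allI impI)
      fix x assume x: "x + 1 < m"
      show "adj E (g x) (g (x + 1))"
      proof (cases "x < p")
        case True thus ?thesis using gl adjf pq by simp
      next
        case False
        hence "g x = f (x + (q - p))" "g (x + 1) = f (x + (q - p) + 1)" using gh by auto
        moreover have "x + (q - p) + 1 < n" using x by (simp add: m_def)
        ultimately show ?thesis using adjf by simp
      qed
    qed
    have B: "\<forall>x. 0 < x \<and> x + 1 < m \<longrightarrow> (if (g (x - 1), g x) \<in> E \<and> (g (x + 1), g x) \<in> E
        then (\<exists>w\<in>Z. (g x, w) \<in> E\<^sup>*) else g x \<notin> Z)"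
    proof (intro allI impI)
      fix x assume x: "0 < x \<and> x + 1 < m"
      show "if (g (x - 1), g x) \<in> E \<and> (g (x + 1), g x) \<in> E
        then (\<exists>w\<in>Z. (g x, w) \<in> E\<^sup>*) else g x \<notin> Z"
      proof (cases x p rule: linorder_cases)
        case less
        thus ?thesis using gl cf[of x] pq x by simp
      next
        case greater
        have "g (x - 1) = f (x + (q - p) - 1)" using gh[of "x - 1"] greater by simp
        moreover have "g x = f (x + (q - p))" "g (x + 1) = f (x + (q - p) + 1)" using gh greater by auto
        moreover have "0 < x + (q - p)" "x + (q - p) + 1 < n" using x by (auto simp: m_def)
        ultimately show ?thesis using cf[of "x + (q - p)"] by simp
      next
        case equal
        have q1: "q + 1 < n" using x equal pq unfolding m_def by linarith
        have p0: "0 < p" using x equal by simp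
        have G: "g (x - 1) = f (p - 1)" "g x = f p" "g (x + 1) = f (q + 1)"
          using equal gl gh[of "p + 1"] pq by auto
        show ?thesis
        proof (cases "(f (p - 1), f p) \<in> E \<and> (f (q + 1), f p) \<in> E")
          case True
          have "\<exists>w\<in>Z. (f p, w) \<in> E\<^sup>*"
          proof (cases "(f (p + 1), f p) \<in> E")
            case True
            thus ?thesis using cf[of p] p0 pq \<open>(f (p - 1), f p) \<in> E \<and> (f (q + 1), f p) \<in> E\<close> by simp
          next
            case False
            with adjf[of p] pq have e: "(f p, f (p + 1)) \<in> E" by (simp add: adj_def)
            have "(\<exists>w\<in>Z. (f (p + 1), w) \<in> E\<^sup>*) \<or> ((f (p + 1), f q) \<in> E\<^sup>* \<and> (f (q - 1), f q) \<in> E)"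
              using wk_fwd[OF wf, of "p + 1" q] e pq by simp
            thus ?thesis
            proof
              assume "\<exists>w\<in>Z. (f (p + 1), w) \<in> E\<^sup>*"
              thus ?thesis using e by (meson converse_rtrancl_into_rtrancl)
            next
              assume "(f (p + 1), f q) \<in> E\<^sup>* \<and> (f (q - 1), f q) \<in> E"
              hence "(f p, f p) \<in> E\<^sup>+" using e pq(3) by (metis rtrancl_into_trancl2)
              thus ?thesis using acyc by (simp add: acyclic_def)
            qed
          qed
          thus ?thesis using G True by simp
        next
          case False
          have "f p \<notin> Z"
          proof (cases "(f (p - 1), f p) \<in> E")
            case False
            thus ?thesis using cf[of p] p0 pq by simp
          next
            case True
            hence "(f (q + 1), f q) \<notin> E" using \<open>\<not> ((f (p - 1), f p) \<in> E \<and> (f (q + 1), f p) \<in> E)\<close> pq by simp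
            thus ?thesis using cf[of q] pq q1 by simp
          qed
          thus ?thesis using G False by auto
        qed
      qed
    qed
    have "wk E Z g m" unfolding wk_def using A B m2 by simp
    thus ?thesis using less.IH[OF m_lt _ g0 gm less.prems(4)] by blast
  qed
qed

lemma wk_dconn:
  assumes "wk E Z g m" "inj_on g {..<m}" "g 0 = i" "g (m - 1) = j"
  shows "d_connected E i j Z"
proof -
  let ?ps = "map g [0..<m]"
  have m2: "2 \<le> m" using assms(1) by (simp add: wk_def)
  have nth: "\<And>x. x < m \<Longrightarrow> ?ps ! x = g x" by simp
  have "length ?ps \<ge> 2" using m2 by simp
  moreover have "hd ?ps = i" using m2 assms(3) by (simp add: hd_map hd_upt)
  moreover have "last ?ps = j" using m2 assms(4) by (simp add: last_map)
  moreover have "distinct ?ps" using assms(2) by (simp add: distinct_map atLeast0LessThan)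
  moreover have "\<forall>x. x + 1 < length ?ps \<longrightarrow> adj E (?ps ! x) (?ps ! (x + 1))"
    using assms(1) by (simp add: wk_def)
  moreover have "\<forall>x. 0 < x \<and> x + 1 < length ?ps \<longrightarrow>
          (if collider E ?ps x then (\<exists>w \<in> Z. (?ps ! x, w) \<in> E\<^sup>*) else ?ps ! x \<notin> Z)"
  proof (intro allI impI)
    fix x assume x: "0 < x \<and> x + 1 < length ?ps"
    hence "?ps ! (x - 1) = g (x - 1)" "?ps ! x = g x" "?ps ! (x + 1) = g (x + 1)" by auto
    thus "if collider E ?ps x then (\<exists>w \<in> Z. (?ps ! x, w) \<in> E\<^sup>*) else ?ps ! x \<notin> Z"
      using assms(1) x unfolding wk_def collider_def by simp
  qed
  ultimately show ?thesis unfolding d_connected_def by blast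
qed


lemma reach_up:
  assumes "(v, i) \<in> E\<^sup>+"
  shows "(\<forall>x. (v, x) \<in> E\<^sup>* \<longrightarrow> x \<notin> Z) \<longrightarrow> reach E Z i v False"
  using assms
proof (induction rule: converse_trancl_induct)
  case (base y)
  then show ?case by (simp add: reach.r2)
next
  case (step y z)
  show ?case
  proof
    assume h: "\<forall>x. (y, x) \<in> E\<^sup>* \<longrightarrow> x \<notin> Z"
    have "\<forall>x. (z, x) \<in> E\<^sup>* \<longrightarrow> x \<notin> Z" using h step(1)
      by (meson converse_rtrancl_into_rtrancl)
    with step have "reach E Z i z False" by simp
    moreover have "z \<notin> Z" using h step(1) by blast
    ultimately show "reach E Z i y False" using step(1) by (rule reach.r5)
  qed
qed

lemma reach_down:
  assumes "(v, j) \<in> E\<^sup>+"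
  shows "(\<forall>x. (v, x) \<in> E\<^sup>* \<longrightarrow> x \<notin> Z) \<longrightarrow> reach E Z i v d \<longrightarrow> reach E Z i j True"
  using assms
proof (induction rule: trancl_induct)
  case (base y)
  then show ?case by (auto intro: reach.r4)
next
  case (step y z)
  show ?case
  proof (intro impI)
    assume h: "\<forall>x. (v, x) \<in> E\<^sup>* \<longrightarrow> x \<notin> Z" and r: "reach E Z i v d"
    with step have "reach E Z i y True" by simp
    moreover have "y \<notin> Z" using h step(1) by (meson trancl_into_rtrancl)
    ultimately show "reach E Z i z True" using step(2) by (rule reach.r4)
  qed
qed

lemma core:
  assumes acyc: "acyclic E" and kw: "(k, w) \<in> E\<^sup>+" "w \<in> V"
    and ij: "i \<noteq> j" "i \<noteq> k" "j \<noteq> k"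
    and dc: "d_connected E i j (V - {i, j})"
  shows "d_connected E i j (V - {k} - {i, j})"
proof -
  define S where "S = V - {i, j}"
  define S' where "S' = V - {k} - {i, j}"
  have asym: "(b, a) \<notin> E" if "(a, b) \<in> E" for a b using acyc_asym[OF acyc that] .
  obtain ps where ps: "length ps \<ge> 2" "hd ps = i" "last ps = j" "distinct ps"
    "\<forall>m. m + 1 < length ps \<longrightarrow> adj E (ps ! m) (ps ! (m + 1))"
    "\<forall>m. 0 < m \<and> m + 1 < length ps \<longrightarrow>
          (if collider E ps m then (\<exists>w \<in> S. (ps ! m, w) \<in> E\<^sup>*) else ps ! m \<notin> S)"
    using dc unfolding d_connected_def S_def by blast
  define n where "n = length ps"
  have pne: "ps \<noteq> []" using ps(1) by auto
  have p0: "ps ! 0 = i" using ps(2) hd_conv_nth[OF pne] by simp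
  have pl: "ps ! (n - 1) = j" using ps(3) last_conv_nth[OF pne] by (simp add: n_def)
  have inv: "m < n \<Longrightarrow> reach E S' i (ps ! m) ((ps ! (m - 1), ps ! m) \<in> E) \<or> (\<exists>d. reach E S' i j d)"
    if "1 \<le> m" for m
    using that
  proof (induction m rule: dec_induct)
    case base
    have "adj E (ps ! 0) (ps ! 1)" using ps(5) ps(1) by auto
    hence "(i, ps ! 1) \<in> E \<or> (ps ! 1, i) \<in> E" using p0 by (simp add: adj_def)
    thus ?case
    proof
      assume h: "(i, ps ! 1) \<in> E"
      hence "reach E S' i (ps ! 1) True" by (rule reach.r1)
      thus ?thesis using h p0 by simp
    next
      assume h: "(ps ! 1, i) \<in> E"
      hence "reach E S' i (ps ! 1) False" by (rule reach.r2)
      moreover have "(i, ps ! 1) \<notin> E" using h asym by blast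
      ultimately show ?thesis using p0 by simp
    qed
  next
    case (step m)
    have mi: "0 < m" "m + 1 < n" using step by auto
    define a where "a = ps ! (m - 1)"
    define v where "v = ps ! m"
    define u where "u = ps ! (Suc m)"
    have suc: "Suc m - 1 = m" by simp
    have adjvu: "adj E v u" using ps(5) mi by (simp add: n_def v_def u_def)
    have cond: "if collider E ps m then (\<exists>w \<in> S. (v, w) \<in> E\<^sup>*) else v \<notin> S"
      using ps(6) mi by (simp add: n_def v_def)
    have IH: "reach E S' i v ((a, v) \<in> E) \<or> (\<exists>d. reach E S' i j d)"
      using step mi by (simp add: a_def v_def)
    show ?case unfolding suc
      unfolding v_def[symmetric] u_def[symmetric]
    proof (cases "collider E ps m")
      case True
      hence av: "(a, v) \<in> E" and uv: "(u, v) \<in> E"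
        by (auto simp: collider_def a_def v_def u_def)
      have nvu: "(v, u) \<notin> E" using asym uv by blast
      obtain w0 where w0: "w0 \<in> S" "(v, w0) \<in> E\<^sup>*" using cond True by auto
      show "reach E S' i u ((v, u) \<in> E) \<or> (\<exists>d. reach E S' i j d)"
      proof (cases "\<exists>w\<in>S'. (v, w) \<in> E\<^sup>*")
        case True
        from IH show ?thesis
        proof
          assume "reach E S' i v ((a, v) \<in> E)"
          hence "reach E S' i v True" using av by simp
          hence "reach E S' i u False" using True uv by (rule reach.r3)
          thus ?thesis using nvu by simp
        qed simp
      next
        case False
        hence nr: "\<forall>x. (v, x) \<in> E\<^sup>* \<longrightarrow> x \<notin> S'" by blast
        have "w0 = k" using w0 nr by (auto simp: S_def S'_def)
        hence vw: "(v, w) \<in> E\<^sup>+" using w0 kw by (meson rtrancl_trancl_trancl)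
        hence "w \<notin> S'" using nr by (meson trancl_into_rtrancl)
        moreover have "w \<noteq> k"
        proof
          assume "w = k" thus False using kw acyc by (simp add: acyclic_def)
        qed
        ultimately have "w = i \<or> w = j" using kw by (auto simp: S'_def)
        have vS: "v \<notin> S'" using nr by blast
        from \<open>w = i \<or> w = j\<close> show ?thesis
        proof
          assume "w = i"
          hence "reach E S' i v False" using reach_up[of v i E S'] vw nr by simp
          hence "reach E S' i u False" using vS uv by (rule reach.r5)
          thus ?thesis using nvu by simp
        next
          assume "w = j"
          from IH show ?thesis
          proof
            assume "reach E S' i v ((a, v) \<in> E)"
            thus ?thesis using reach_down[of v j E S' i] vw nr \<open>w = j\<close> by blast
          qed simp
        qed
      qed
    next
      case False
      hence vS: "v \<notin> S'" using cond by (auto simp: S_def S'_def)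
      from IH show "reach E S' i u ((v, u) \<in> E) \<or> (\<exists>d. reach E S' i j d)"
      proof
        assume r: "reach E S' i v ((a, v) \<in> E)"
        show ?thesis
        proof (cases "(v, u) \<in> E")
          case True
          hence "reach E S' i u True" using r vS by (intro reach.r4)
          thus ?thesis using True by simp
        next
          case nf: False
          hence uv: "(u, v) \<in> E" using adjvu by (simp add: adj_def)
          hence "(a, v) \<notin> E" using False by (simp add: collider_def a_def v_def u_def)
          hence "reach E S' i v False" using r by simp
          hence "reach E S' i u False" using vS uv by (rule reach.r5)
          thus ?thesis using nf by simp
        qed
      qed simp
    qed
  qed
  have "reach E S' i j ((ps ! (n - 1 - 1), ps ! (n - 1)) \<in> E) \<or> (\<exists>d. reach E S' i j d)"
    using inv[of "n - 1"] ps(1) pl by (simp add: n_def)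
  hence "\<exists>d. reach E S' i j d" by blast
  then obtain d where "reach E S' i j d" by blast
  then obtain f m where f: "wk E S' f m" "f 0 = i" "f (m - 1) = j"
    using reach_wk[OF asym] by blast
  then obtain g m' where "wk E S' g m'" "g 0 = i" "g (m' - 1) = j" "inj_on g {..<m'}"
    using shortcut[OF acyc f(1) f(2) f(3) ij(1)] by blast
  hence "d_connected E i j S'" using wk_dconn by blast
  thus ?thesis by (simp add: S'_def)
qed

theorem proposition2:
  fixes p :: nat and E :: "(nat \<times> nat) set" and V :: "nat set" and k :: nat
  assumes "is_dag p E"
    and "V \<subseteq> {1..p}"
    and "k \<in> V"
    and "removal_score E V k > 0"
  shows "k \<in> Maximal E V"
proof (rule ccontr)
  assume "k \<notin> Maximal E V"
  then obtain w where kw: "(k, w) \<in> E\<^sup>+" "w \<in> V" using assms(3)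
    by (auto simp: Maximal_def descendants_def)
  have acyc: "acyclic E" using assms(1) by (simp add: is_dag_def)
  have "removed_edges E V k = {}"
  proof (rule ccontr)
    assume "removed_edges E V k \<noteq> {}"
    then obtain e where e: "e \<in> moral_edges E V" "e \<subseteq> V - {k}" "e \<notin> moral_edges E (V - {k})"
      by (auto simp: removed_edges_def induced_edges_def)
    then obtain i j where ij: "e = {i, j}" "i \<in> V" "j \<in> V" "i \<noteq> j" "d_connected E i j (V - {i, j})"
      by (auto simp: moral_edges_def)
    have "i \<noteq> k" "j \<noteq> k" using e(2) ij(1) by auto
    hence "d_connected E i j (V - {k} - {i, j})" using core[OF acyc kw] ij by blast
    hence "e \<in> moral_edges E (V - {k})" using ij \<open>i \<noteq> k\<close> \<open>j \<noteq> k\<close>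
      unfolding moral_edges_def by blast
    thus False using e(3) by simp
  qed
  thus False using assms(4) by (simp add: removal_score_def)
qed

end
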